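(* Let $\boldsymbol{z}^{(0)}=(z^{(0)}_1,\dots,z^{(0)}_n)\in[-1,1]^n$ with $\sum_{j=1}^nz^{(0)}_j=0$. Define $\boldsymbol{z}^{(1)},\boldsymbol{z}^{(2)},\dots$ recursively: for each $r\ge0$, let $i$ be the first index at which $\boldsymbol{z}^{(r)}$ attains its minimum and $\ell$ the first index at which it attains its maximum; $\boldsymbol{z}^{(r+1)}$ agrees with $\boldsymbol{z}^{(r)}$ except that $z^{(r+1)}_i=z^{(r+1)}_\ell=(z^{(r)}_i+z^{(r)}_\ell)/2$. Then $\boldsymbol{z}^{(n)}\in[-\tfrac12,\tfrac12]^n$. *)

theory Defs
  imports Complex_Main
begin

text \<open>Vectors in R^n are represented as functions nat => real, with coordinates
  indexed by 0..n-1 (coordinate j+1 of the paper is index j here).\<close>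

definition first_argmin :: "nat \<Rightarrow> (nat \<Rightarrow> real) \<Rightarrow> nat" where
  "first_argmin n z = (LEAST i. i < n \<and> (\<forall>j<n. z i \<le> z j))"

definition first_argmax :: "nat \<Rightarrow> (nat \<Rightarrow> real) \<Rightarrow> nat" where
  "first_argmax n z = (LEAST l. l < n \<and> (\<forall>j<n. z j \<le> z l))"

definition avg_step :: "nat \<Rightarrow> (nat \<Rightarrow> real) \<Rightarrow> (nat \<Rightarrow> real)" where
  "avg_step n z =
     (let i = first_argmin n z; l = first_argmax n z; m = (z i + z l) / 2
      in z(i := m, l := m))"

fun avg_iter :: "nat \<Rightarrow> (nat \<Rightarrow> real) \<Rightarrow> nat \<Rightarrow> (nat \<Rightarrow> real)" where
  "avg_iter n z 0 = z"
| "avg_iter n z (Suc r) = avg_step n (avg_iter n z r)"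

end

theory Submission
  imports Defs
begin

lemma sum_upd_nat:
  fixes f :: "nat \<Rightarrow> real"
  assumes "a < n"
  shows "(\<Sum>j<n. (f(a := b)) j) = (\<Sum>j<n. f j) - f a + b"
proof -
  have "(\<Sum>j<n. (f(a := b)) j) = (f(a:=b)) a + (\<Sum>j\<in>{..<n} - {a}. (f(a := b)) j)"
    using assms by (simp add: sum.remove)
  also have "(\<Sum>j\<in>{..<n} - {a}. (f(a := b)) j) = (\<Sum>j\<in>{..<n} - {a}. f j)"
    by (rule sum.cong) auto
  also have "(\<Sum>j<n. f j) = f a + (\<Sum>j\<in>{..<n} - {a}. f j)"
    using assms by (simp add: sum.remove)
  ultimately show ?thesis by simp
qed

lemma argmin_props:
  assumes "0 < n"
  shows "first_argmin n z < n \<and> (\<forall>j<n. z (first_argmin n z) \<le> z j)"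
proof -
  have fin: "finite (z ` {..<n})" and ne: "z ` {..<n} \<noteq> {}" using assms by auto
  then have "Min (z ` {..<n}) \<in> z ` {..<n}" by (rule Min_in)
  then obtain i where i: "i < n" "z i = Min (z ` {..<n})" by auto
  have "i < n \<and> (\<forall>j<n. z i \<le> z j)" using i fin by auto
  then show ?thesis unfolding first_argmin_def by (rule LeastI)
qed

lemma argmax_props:
  assumes "0 < n"
  shows "first_argmax n z < n \<and> (\<forall>j<n. z j \<le> z (first_argmax n z))"
proof -
  have fin: "finite (z ` {..<n})" and ne: "z ` {..<n} \<noteq> {}" using assms by auto
  then have "Max (z ` {..<n}) \<in> z ` {..<n}" by (rule Max_in)
  then obtain i where i: "i < n" "z i = Max (z ` {..<n})" by auto
  have "i < n \<and> (\<forall>j<n. z j \<le> z i)" using i fin by auto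
  then show ?thesis unfolding first_argmax_def by (rule LeastI)
qed

definition good :: "nat \<Rightarrow> (nat \<Rightarrow> real) \<Rightarrow> bool" where
  "good n z \<longleftrightarrow> (\<forall>j<n. z j \<in> {-1..1}) \<and> (\<Sum>j<n. z j) = 0"

definition bad :: "nat \<Rightarrow> (nat \<Rightarrow> real) \<Rightarrow> nat set" where
  "bad n z = {j. j < n \<and> \<bar>z j\<bar> > 1/2}"

lemma step_good:
  assumes "good n z" "0 < n"
  shows "good n (avg_step n z)"
proof -
  define i where "i = first_argmin n z"
  define l where "l = first_argmax n z"
  have i: "i < n" "\<forall>j<n. z i \<le> z j" using argmin_props[OF assms(2)] i_def by auto
  have l: "l < n" "\<forall>j<n. z j \<le> z l" using argmax_props[OF assms(2)] l_def by auto
  define m where "m = (z i + z l) / 2"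
  have st: "avg_step n z = z(i := m, l := m)"
    unfolding avg_step_def i_def l_def m_def Let_def by simp
  have zi: "z i \<in> {-1..1}" "z l \<in> {-1..1}" using assms(1) i l unfolding good_def by auto
  have rng: "\<forall>j<n. (z(i := m, l := m)) j \<in> {-1..1}"
    using assms(1) zi unfolding good_def m_def by auto
  have "(\<Sum>j<n. (z(i := m, l := m)) j) = 0"
  proof (cases "i = l")
    case True
    then have "z(i := m, l := m) = z" unfolding m_def by auto
    then show ?thesis using assms(1) unfolding good_def by simp
  next
    case False
    have "(\<Sum>j<n. (z(i := m, l := m)) j) = (\<Sum>j<n. (z(i := m)) j) - (z(i := m)) l + m"
      using sum_upd_nat[OF l(1)] by simp
    also have "\<dots> = (\<Sum>j<n. z j) - z i + m - z l + m"
      using sum_upd_nat[OF i(1)] False by simp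
    finally have S: "(\<Sum>j<n. (z(i := m, l := m)) j) = (\<Sum>j<n. z j) - z i + m - z l + m" .
    have "(\<Sum>j<n. z j) = 0" using assms(1) unfolding good_def by simp
    then have T: "(\<Sum>j<n. z j) - z i + m - z l + m = 0" unfolding m_def by (simp add: field_simps)
    show ?thesis by (rule trans[OF S T])
  qed
  then show ?thesis using rng st unfolding good_def by simp
qed

lemma step_bad:
  assumes "good n z" "0 < n"
  shows "card (bad n (avg_step n z)) \<le> card (bad n z) - 1"
proof -
  define i where "i = first_argmin n z"
  define l where "l = first_argmax n z"
  have i: "i < n" "\<forall>j<n. z i \<le> z j" using argmin_props[OF assms(2)] i_def by auto
  have l: "l < n" "\<forall>j<n. z j \<le> z l" using argmax_props[OF assms(2)] l_def by auto
  define m where "m = (z i + z l) / 2"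
  have st: "avg_step n z = z(i := m, l := m)"
    unfolding avg_step_def i_def l_def m_def Let_def by simp
  have zi: "z i \<in> {-1..1}" "z l \<in> {-1..1}" using assms(1) i l unfolding good_def by auto
  have s0: "(\<Sum>j<n. z j) = 0" using assms(1) unfolding good_def by simp
  have "(\<Sum>j<n. z i) \<le> (\<Sum>j<n. z j)" using i by (intro sum_mono) auto
  then have "real n * z i \<le> 0" using s0 by simp
  then have i0: "z i \<le> 0" using assms(2) by (simp add: mult_le_0_iff)
  have "(\<Sum>j<n. z j) \<le> (\<Sum>j<n. z l)" using l by (intro sum_mono) auto
  then have "0 \<le> real n * z l" using s0 by simp
  then have l0: "0 \<le> z l" using assms(2) by (simp add: zero_le_mult_iff)
  have "-1/2 \<le> m" "m \<le> 1/2" using zi i0 l0 unfolding m_def by auto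
  then have mm: "\<bar>m\<bar> \<le> 1/2" by (simp add: abs_le_iff)
  have sub: "bad n (avg_step n z) \<subseteq> bad n z - {i, l}"
    using mm unfolding st bad_def by auto
  have fin: "finite (bad n z)" unfolding bad_def by auto
  show ?thesis
  proof (cases "bad n z = {}")
    case True
    then show ?thesis using sub by auto
  next
    case False
    then obtain j where j: "j < n" "\<bar>z j\<bar> > 1/2" unfolding bad_def by auto
    have "i \<in> bad n z \<or> l \<in> bad n z"
    proof (rule ccontr)
      assume "\<not> ?thesis"
      then have a: "\<bar>z i\<bar> \<le> 1/2" "\<bar>z l\<bar> \<le> 1/2" using i l unfolding bad_def by auto
      have "z i \<le> z j" "z j \<le> z l" using i l j by auto
      then show False using a j by auto
    qed
    then obtain k where k: "k \<in> bad n z" "k \<in> {i, l}" by auto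
    have "card (bad n (avg_step n z)) \<le> card (bad n z - {k})"
      using sub k by (intro card_mono) (auto simp: fin)
    also have "\<dots> = card (bad n z) - 1" using k fin by simp
    finally show ?thesis .
  qed
qed

lemma iter_props:
  assumes "good n z0" "0 < n"
  shows "good n (avg_iter n z0 r) \<and> card (bad n (avg_iter n z0 r)) \<le> n - r"
proof (induction r)
  case 0
  have "bad n z0 \<subseteq> {..<n}" unfolding bad_def by auto
  then have "card (bad n z0) \<le> n" using card_mono[of "{..<n}"] by fastforce
  then show ?case using assms by simp
next
  case (Suc r)
  let ?z = "avg_iter n z0 r"
  have g: "good n ?z" and c: "card (bad n ?z) \<le> n - r" using Suc by auto
  have "card (bad n (avg_step n ?z)) \<le> card (bad n ?z) - 1" by (rule step_bad[OF g assms(2)])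
  also have "\<dots> \<le> n - Suc r" using c by simp
  finally show ?case using step_good[OF g assms(2)] by simp
qed

theorem lemma2p6:
  fixes n :: nat and z0 :: "nat \<Rightarrow> real"
  assumes "\<forall>j<n. z0 j \<in> {-1..1}"
    and "(\<Sum>j<n. z0 j) = 0"
  shows "\<forall>j<n. avg_iter n z0 n j \<in> {-1/2..1/2}"
proof (cases "n = 0")
  case True
  then show ?thesis by simp
next
  case False
  have g: "good n z0" using assms unfolding good_def by simp
  have "card (bad n (avg_iter n z0 n)) = 0" using iter_props[OF g, of n] False by simp
  moreover have "finite (bad n (avg_iter n z0 n))" unfolding bad_def by auto
  ultimately have "bad n (avg_iter n z0 n) = {}" by simp
  then have "\<forall>j<n. \<bar>avg_iter n z0 n j\<bar> \<le> 1/2" unfolding bad_def by auto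
  then show ?thesis by (auto simp: abs_le_iff)
qed

end
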